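(* Let $\mathbf c=\{c_n\}_{n=1}^{\infty}$ be a complex $O$-regularly varying quasimonotone sequence with $\lim_{n\to\infty}c_n=0$. Then there exist a natural number $N_0$ and a constant $M>0$ such that $$\sum_{n=m}^{2m}|c_n-c_{n+1}|\le M\max_{m\le n<m+N_0}|c_n|\qquad\text{for all } m=1,2,\dots.$$
   Context: A sequence $\{R(n)\}$ is $O$-regularly varying if it is non-decreasing, positive, and $\limsup_{n\to\infty}R(2n)/R(n)<\infty$. For $\theta\in[0,\pi/2]$, $K(\theta)=\{z\in\mathbb C:|\arg z|\le\theta\}$. A complex sequence $\{c_n\}$ is $O$-regularly varying quasimonotone (in the complex sense) if for some $\theta_0\in[0,\pi/2)$ and some $O$-regularly varying sequence $\{R(n)\}$ one has $\frac{c_n}{R(n)}-\frac{c_{n+1}}{R(n+1)}\in K(\theta_0)$ for all $n$. *)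

theory Defs
  imports "HOL-Analysis.Analysis" "HOL-Complex_Analysis.Complex_Analysis"
begin

text \<open>Sequences are indexed from 1; values at index 0 are irrelevant.\<close>

definition O_regularly_varying :: "(nat \<Rightarrow> real) \<Rightarrow> bool" where
  "O_regularly_varying R \<longleftrightarrow>
     (\<forall>n\<ge>1. R n \<le> R (Suc n)) \<and> (\<forall>n\<ge>1. R n > 0) \<and>
     limsup (\<lambda>n. ereal (R (2*n) / R n)) < \<infinity>"

definition sector :: "real \<Rightarrow> complex set" where
  "sector \<theta> = {z. \<bar>Arg z\<bar> \<le> \<theta>}"

definition ORV_quasimonotone :: "(nat \<Rightarrow> complex) \<Rightarrow> bool" where
  "ORV_quasimonotone c \<longleftrightarrow>
     (\<exists>\<theta>0 R. 0 \<le> \<theta>0 \<and> \<theta>0 < pi/2 \<and> O_regularly_varying R \<and>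
        (\<forall>n\<ge>1. c n / complex_of_real (R n) - c (Suc n) / complex_of_real (R (Suc n)) \<in> sector \<theta>0))"

end

theory Submission
  imports Defs
begin

lemma sector_re:
  assumes "0 \<le> \<theta>" "\<theta> < pi/2" "z \<in> sector \<theta>"
  shows "cmod z * cos \<theta> \<le> Re z"
proof (cases "z = 0")
  case True then show ?thesis by simp
next
  case False
  have eq: "cmod z * cos (Arg z) = Re z"
    using False Arg_eq [of z] by (metis Re_exp exp_Ln norm_exp_eq_Re Arg_def)
  have a: "\<bar>Arg z\<bar> \<le> \<theta>" using assms(3) by (simp add: sector_def)
  have "cos \<theta> \<le> cos \<bar>Arg z\<bar>"
    by (rule cos_monotone_0_pi_le) (use a assms in auto)
  then have "cos \<theta> \<le> cos (Arg z)" by simp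
  then have "cmod z * cos \<theta> \<le> cmod z * cos (Arg z)" by (simp add: mult_left_mono)
  then show ?thesis using eq by simp
qed

lemma key:
  fixes d :: "nat \<Rightarrow> complex" and \<delta> :: real
  assumes dp: "\<delta> > 0"
    and sec: "\<And>n. n \<ge> 1 \<Longrightarrow> cmod (d n - d (Suc n)) * \<delta> \<le> Re (d n - d (Suc n))"
    and lim: "d \<longlonglongrightarrow> 0"
  shows "\<And>n m. 1 \<le> n \<Longrightarrow> n \<le> m \<Longrightarrow> Re (d m) \<le> Re (d n)"
    and "\<And>j. 1 \<le> j \<Longrightarrow> cmod (d j) * \<delta> \<le> Re (d j)"
proof -
  have nn: "0 \<le> Re (d n - d (Suc n))" if "n \<ge> 1" for n
    using sec[OF that] dp by (meson mult_nonneg_nonneg norm_ge_zero order_trans less_imp_le)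
  show mono: "Re (d m) \<le> Re (d n)" if "1 \<le> n" "n \<le> m" for n m
    using that(2)
  proof (induction m rule: dec_induct)
    case base then show ?case by simp
  next
    case (step k) then show ?case using nn[of k] that(1) by simp
  qed
  fix j :: nat assume j: "1 \<le> j"
  have tel: "cmod (d j - d N) * \<delta> \<le> Re (d j) - Re (d N)" if "j \<le> N" for N
    using that
  proof (induction N rule: dec_induct)
    case base then show ?case by simp
  next
    case (step k)
    have "cmod (d j - d (Suc k)) \<le> cmod (d j - d k) + cmod (d k - d (Suc k))"
      by (metis diff_add_cancel norm_triangle_ineq add.commute add_diff_eq)
    then have "cmod (d j - d (Suc k)) * \<delta> \<le> cmod (d j - d k) * \<delta> + cmod (d k - d (Suc k)) * \<delta>"
      using dp by (metis distrib_right mult_right_mono less_imp_le)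
    also have "\<dots> \<le> Re (d j) - Re (d k) + Re (d k - d (Suc k))"
      using step sec[of k] j by simp
    finally show ?case by simp
  qed
  have b: "cmod (d j) * \<delta> \<le> cmod (d N) * \<delta> + (Re (d j) - Re (d N))" if "j \<le> N" for N
  proof -
    have "cmod (d j) \<le> cmod (d N) + cmod (d j - d N)"
      by (metis add.commute diff_add_cancel norm_triangle_ineq)
    then have "cmod (d j) * \<delta> \<le> cmod (d N) * \<delta> + cmod (d j - d N) * \<delta>"
      using dp by (metis distrib_right mult_right_mono less_imp_le)
    then show ?thesis using tel[OF that] by simp
  qed
  have l: "(\<lambda>N. cmod (d N) * \<delta> + (Re (d j) - Re (d N))) \<longlonglongrightarrow> 0 * \<delta> + (Re (d j) - 0)"
    by (intro tendsto_intros lim tendsto_norm_zero) (use lim tendsto_Re[OF lim] in auto)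
  show "cmod (d j) * \<delta> \<le> Re (d j)"
    using LIMSEQ_le_const[OF l, of "cmod (d j) * \<delta>"] b by auto
qed

lemma nonneg_of: "(a::real) * \<delta> \<le> r \<Longrightarrow> 0 \<le> a \<Longrightarrow> 0 < \<delta> \<Longrightarrow> 0 \<le> r"
  by (meson mult_nonneg_nonneg order_trans less_imp_le)

theorem mainTheorem5:
  fixes c :: "nat \<Rightarrow> complex"
  assumes "ORV_quasimonotone c"
    and "c \<longlonglongrightarrow> 0"
  shows "\<exists>N0::nat. N0 \<ge> 1 \<and> (\<exists>M::real. M > 0 \<and>
           (\<forall>m\<ge>1. (\<Sum>n=m..2*m. cmod (c n - c (Suc n)))
                     \<le> M * Max ((\<lambda>n. cmod (c n)) ` {m..<m+N0})))"
proof -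
  obtain \<theta>0 R where th: "0 \<le> \<theta>0" "\<theta>0 < pi/2" and orv: "O_regularly_varying R"
    and secR: "\<And>n. n \<ge> 1 \<Longrightarrow> c n / complex_of_real (R n) - c (Suc n) / complex_of_real (R (Suc n)) \<in> sector \<theta>0"
    using assms(1) unfolding ORV_quasimonotone_def by blast
  have Rs: "\<And>n. n \<ge> 1 \<Longrightarrow> R n \<le> R (Suc n)" and Rp: "\<And>n. n \<ge> 1 \<Longrightarrow> R n > 0"
    and ls: "limsup (\<lambda>n. ereal (R (2*n) / R n)) < \<infinity>"
    using orv unfolding O_regularly_varying_def by auto
  have Rm: "R a \<le> R b" if "1 \<le> a" "a \<le> b" for a b
    using that(2)
  proof (induction b rule: dec_induct)
    case base then show ?case by simp
  next
    case (step k) then show ?case using Rs[of k] that(1) by simp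
  qed
  obtain C where C: "\<And>n. R (2*n) / R n \<le> C"
    using limsup_finite_then_bounded[OF ls] by blast
  have C2: "R (2*n) \<le> C * R n" if "n \<ge> 1" for n
    using C[of n] Rp[OF that] by (simp add: divide_le_eq)
  have C1: "1 \<le> C" using C[of 1] Rm[of 1 2] Rp[of 1] le_divide_eq_1_pos[of "R 1" "R 2"] by (simp del: le_divide_eq_1_pos)
  define \<delta> where "\<delta> = cos \<theta>0"
  have dp: "\<delta> > 0" unfolding \<delta>_def using th by (intro cos_gt_zero_pi) auto
  define d where "d n = c n / complex_of_real (R n)" for n
  have sec: "cmod (d n - d (Suc n)) * \<delta> \<le> Re (d n - d (Suc n))" if "n \<ge> 1" for n
    unfolding d_def \<delta>_def using sector_re[OF th secR[OF that]] .
  have lim: "d \<longlonglongrightarrow> 0"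
  proof (rule Lim_null_comparison)
    show "\<forall>\<^sub>F n in sequentially. norm (d n) \<le> norm (c n) / R 1"
      unfolding eventually_sequentially
    proof (intro exI allI impI)
      fix n :: nat assume n: "1 \<le> n"
      have "R 1 \<le> R n" using Rm n by simp
      then have "norm (c n) / R n \<le> norm (c n) / R 1"
        using Rp[of 1] by (intro divide_left_mono) auto
      then show "norm (d n) \<le> norm (c n) / R 1"
        unfolding d_def using Rp[OF n] by (simp add: norm_divide)
    qed
    show "(\<lambda>n. norm (c n) / R 1) \<longlonglongrightarrow> 0"
      using tendsto_divide[OF tendsto_norm_zero[OF assms(2)] tendsto_const[of "R 1"]] Rp[of 1] by simp
  qed
  have K1: "\<And>n m. 1 \<le> n \<Longrightarrow> n \<le> m \<Longrightarrow> Re (d m) \<le> Re (d n)"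
    by (rule key(1)[of \<delta> d]) (use dp sec lim in auto)
  have K2: "\<And>j. 1 \<le> j \<Longrightarrow> cmod (d j) * \<delta> \<le> Re (d j)"
    by (rule key(2)[of \<delta> d]) (use dp sec lim in auto)
  have cd: "c n = complex_of_real (R n) * d n" if "n \<ge> 1" for n
    unfolding d_def using Rp[OF that] by simp
  have main: "(\<Sum>n=m..2*m. cmod (c n - c (Suc n))) \<le> (2*C*C/\<delta>) * cmod (c m)" if m: "m \<ge> 1" for m
  proof -
    have trm: "\<delta> * cmod (c k - c (Suc k)) \<le> R (Suc (2*m)) * Re (d k - d (Suc k)) + (R (Suc k) - R k) * Re (d m)"
      if k: "k \<in> {m..2*m}" for k
    proof -
      have k1: "k \<ge> 1" using k m by auto
      have "c k - c (Suc k) = complex_of_real (R k) * (d k - d (Suc k)) - complex_of_real (R (Suc k) - R k) * d (Suc k)"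
        using cd[OF k1] cd[of "Suc k"] by (simp add: algebra_simps)
      then have "cmod (c k - c (Suc k)) \<le> cmod (complex_of_real (R k) * (d k - d (Suc k))) + cmod (complex_of_real (R (Suc k) - R k) * d (Suc k))"
        by (metis norm_triangle_ineq4)
      also have "\<dots> = R k * cmod (d k - d (Suc k)) + (R (Suc k) - R k) * cmod (d (Suc k))"
        unfolding norm_mult norm_of_real using Rp[OF k1] Rs[OF k1] by simp
      finally have "\<delta> * cmod (c k - c (Suc k)) \<le> \<delta> * (R k * cmod (d k - d (Suc k)) + (R (Suc k) - R k) * cmod (d (Suc k)))"
        using dp by simp
      also have "\<dots> = R k * (cmod (d k - d (Suc k)) * \<delta>) + (R (Suc k) - R k) * (cmod (d (Suc k)) * \<delta>)"
        by (simp add: algebra_simps)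
      also have "\<dots> \<le> R k * Re (d k - d (Suc k)) + (R (Suc k) - R k) * Re (d (Suc k))"
        using sec[OF k1] K2[of "Suc k"] Rp[OF k1] Rs[OF k1]
        by (intro add_mono mult_left_mono) auto
      also have "\<dots> \<le> R (Suc (2*m)) * Re (d k - d (Suc k)) + (R (Suc k) - R k) * Re (d m)"
      proof (intro add_mono mult_right_mono mult_left_mono)
        show "R k \<le> R (Suc (2 * m))" using Rm k1 k by auto
        show "0 \<le> Re (d k - d (Suc k))"
          using nonneg_of[OF sec[OF k1] norm_ge_zero dp] .
        show "Re (d (Suc k)) \<le> Re (d m)" using K1 m k by auto
        show "0 \<le> R (Suc k) - R k" using Rs[OF k1] by simp
      qed
      finally show ?thesis .
    qed
    have "\<delta> * (\<Sum>n=m..2*m. cmod (c n - c (Suc n))) = (\<Sum>n=m..2*m. \<delta> * cmod (c n - c (Suc n)))"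
      by (simp add: sum_distrib_left)
    also have "\<dots> \<le> (\<Sum>n=m..2*m. R (Suc (2*m)) * Re (d n - d (Suc n)) + (R (Suc n) - R n) * Re (d m))"
      by (rule sum_mono) (rule trm)
    also have "\<dots> = R (Suc (2*m)) * (\<Sum>n=m..2*m. (- Re (d (Suc n))) - (- Re (d n))) + (\<Sum>n=m..2*m. R (Suc n) - R n) * Re (d m)"
      by (simp add: sum.distrib sum_distrib_left sum_distrib_right)
    also have "\<dots> = R (Suc (2*m)) * (Re (d m) - Re (d (Suc (2*m)))) + (R (Suc (2*m)) - R m) * Re (d m)"
      by (subst sum_Suc_diff, simp, subst sum_Suc_diff, simp) simp
    also have "\<dots> \<le> 2 * R (Suc (2*m)) * Re (d m)"
    proof -
      have "cmod (d (Suc (2*m))) * \<delta> \<le> Re (d (Suc (2*m)))" by (rule K2) simp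
      then have "0 \<le> Re (d (Suc (2*m)))" using nonneg_of norm_ge_zero dp by blast
      moreover have "0 \<le> R m" using Rp[OF m] by simp
      moreover have "0 \<le> R (Suc (2*m))" using Rp[of "Suc (2*m)"] by simp
      moreover have "0 \<le> Re (d m)" using nonneg_of[OF K2[OF m] norm_ge_zero dp] .
      ultimately have "0 \<le> R (Suc (2*m)) * Re (d (Suc (2*m)))" "0 \<le> R m * Re (d m)"
        by (simp_all add: mult_nonneg_nonneg)
      then show ?thesis by (simp add: algebra_simps)
    qed
    also have "\<dots> \<le> 2 * R (Suc (2*m)) * cmod (d m)"
      using Rp[of "Suc (2*m)"] complex_Re_le_cmod[of "d m"] by (intro mult_left_mono) auto
    also have "\<dots> = 2 * (R (Suc (2*m)) / R m) * cmod (c m)"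
      unfolding d_def using Rp[OF m] by (simp add: norm_divide)
    also have "\<dots> \<le> 2 * (C * C) * cmod (c m)"
    proof -
      have "R (Suc (2*m)) \<le> R (2*Suc m)" using Rm[of "Suc (2*m)" "2*Suc m"] by simp
      also have "\<dots> \<le> C * R (Suc m)" using C2[of "Suc m"] by simp
      also have "\<dots> \<le> C * R (2*m)" using Rm[of "Suc m" "2*m"] m C1 by (intro mult_left_mono) auto
      also have "\<dots> \<le> C * (C * R m)" using C2[OF m] C1 by (intro mult_left_mono) auto
      finally have "R (Suc (2*m)) / R m \<le> C * C" using Rp[OF m] by (simp add: divide_le_eq)
      then show ?thesis by (intro mult_right_mono mult_left_mono) auto
    qed
    finally have "\<delta> * (\<Sum>n=m..2*m. cmod (c n - c (Suc n))) \<le> 2 * (C * C) * cmod (c m)" .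
    then show ?thesis using dp by (simp add: field_simps)
  qed
  show ?thesis
  proof (intro exI conjI allI impI)
    show "(1::nat) \<le> 1" by simp
    show "0 < 2*C*C/\<delta>" using C1 dp by simp
    fix m :: nat assume m: "1 \<le> m"
    have "{m..<m+1} = {m}" by auto
    then show "(\<Sum>n=m..2*m. cmod (c n - c (Suc n))) \<le> 2*C*C/\<delta> * Max ((\<lambda>n. cmod (c n)) ` {m..<m+1})"
      using main[OF m] by simp
  qed
qed

end
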